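(* Let $L$ be a torsion-free abelian group of rank 1, $L^\vee=\operatorname{Hom}(L,\mathbf{Q}/\mathbf{Z})$ and $\operatorname{Tor}(L^\vee)$ its torsion subgroup. Let $S$ be the set of primes $p$ for which $L$ is $p$-divisible, and $\mu_{(S)}=\bigoplus_{p\notin S}\mathbf{Q}_p/\mathbf{Z}_p\subset\mathbf{Q}/\mathbf{Z}$ (the roots of unity of order prime to every $p\in S$). For $\xi\in\operatorname{Hom}(L,\widehat{\mathbf{Z}})$ define $\xi^\vee:\mathbf{Q}/\mathbf{Z}\to L^\vee$ by $\xi^\vee(r)(x)=r\cdot\xi(x)\in\mathbf{Q}/\mathbf{Z}$ (using the natural $\widehat{\mathbf{Z}}$-module structure of $\mathbf{Q}/\mathbf{Z}$; this is the Pontryagin dual of $\xi$). Then the following are equivalent: (1) $\xi$ generates the $\widehat{\mathbf{Z}}$-module $\operatorname{Hom}(L,\widehat{\mathbf{Z}})$; (2) the restriction of $\xi^\vee$ to $\mu_{(S)}$ is an isomorphism $\mu_{(S)}\xrightarrow{\sim}\operatorname{Tor}(L^\vee)$. *)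

theory Defs
  imports Complex_Main "HOL-Algebra.Group" "HOL-Computational_Algebra.Primes"
begin

text \<open>Torsion-free abelian group of rank 1 (multiplicative HOL-Algebra notation):
  commutative, torsion-free, nontrivial, and any two elements are Z-linearly dependent
  (so a maximal independent subset has exactly one element).\<close>
definition torsion_free_rank1 :: "('a, 'b) monoid_scheme \<Rightarrow> bool" where
  "torsion_free_rank1 L \<longleftrightarrow> comm_group L
     \<and> (\<forall>x\<in>carrier L. \<forall>n::nat. n > 0 \<and> x [^]\<^bsub>L\<^esub> n = \<one>\<^bsub>L\<^esub> \<longrightarrow> x = \<one>\<^bsub>L\<^esub>)
     \<and> (\<exists>x\<in>carrier L. x \<noteq> \<one>\<^bsub>L\<^esub>)
     \<and> (\<forall>x\<in>carrier L. \<forall>y\<in>carrier L. \<exists>(m::int) (n::int). (m \<noteq> 0 \<or> n \<noteq> 0)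
            \<and> x [^]\<^bsub>L\<^esub> m \<otimes>\<^bsub>L\<^esub> y [^]\<^bsub>L\<^esub> n = \<one>\<^bsub>L\<^esub>)"

text \<open>Profinite integers: compatible systems (a_n mod n)_{n \<ge> 1} = lim Z/nZ,
  component a_n represented in {0..<n}; a_0 = 0 by convention.\<close>
definition is_zhat :: "(nat \<Rightarrow> int) \<Rightarrow> bool" where
  "is_zhat a \<longleftrightarrow> a 0 = 0 \<and> (\<forall>n>0. 0 \<le> a n \<and> a n < int n)
     \<and> (\<forall>m n. 0 < m \<longrightarrow> 0 < n \<longrightarrow> m dvd n \<longrightarrow> a m = a n mod int m)"

definition zhat_add :: "(nat \<Rightarrow> int) \<Rightarrow> (nat \<Rightarrow> int) \<Rightarrow> (nat \<Rightarrow> int)" where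
  "zhat_add a b = (\<lambda>n. if n = 0 then 0 else (a n + b n) mod int n)"

definition zhat_mul :: "(nat \<Rightarrow> int) \<Rightarrow> (nat \<Rightarrow> int) \<Rightarrow> (nat \<Rightarrow> int)" where
  "zhat_mul a b = (\<lambda>n. if n = 0 then 0 else (a n * b n) mod int n)"

definition zhat_hom :: "('a, 'b) monoid_scheme \<Rightarrow> ('a \<Rightarrow> nat \<Rightarrow> int) \<Rightarrow> bool" where
  "zhat_hom L h \<longleftrightarrow> (\<forall>x\<in>carrier L. is_zhat (h x))
     \<and> (\<forall>x\<in>carrier L. \<forall>y\<in>carrier L. h (x \<otimes>\<^bsub>L\<^esub> y) = zhat_add (h x) (h y))"

definition zhat_generates :: "('a, 'b) monoid_scheme \<Rightarrow> ('a \<Rightarrow> nat \<Rightarrow> int) \<Rightarrow> bool" where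
  "zhat_generates L \<xi> \<longleftrightarrow> (\<forall>\<psi>. zhat_hom L \<psi> \<longrightarrow>
      (\<exists>a. is_zhat a \<and> (\<forall>x\<in>carrier L. \<psi> x = zhat_mul a (\<xi> x))))"

text \<open>Q/Z represented by rationals in [0,1).\<close>
definition QZ :: "rat set" where
  "QZ = {r. 0 \<le> r \<and> r < 1}"

definition qz_add :: "rat \<Rightarrow> rat \<Rightarrow> rat" where
  "qz_add r s = frac (r + s)"

definition qz_den :: "rat \<Rightarrow> nat" where
  "qz_den r = nat (snd (quotient_of r))"

text \<open>Natural Zhat-module structure on Q/Z: z \<cdot> (a/b) = z_b \<cdot> a/b.\<close>
definition zhat_act :: "(nat \<Rightarrow> int) \<Rightarrow> rat \<Rightarrow> rat" where
  "zhat_act z r = frac (of_int (z (qz_den r)) * r)"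

definition pontryagin_dual :: "('a, 'b) monoid_scheme \<Rightarrow> ('a \<Rightarrow> rat) set" where
  "pontryagin_dual L = {f. (\<forall>x\<in>carrier L. f x \<in> QZ) \<and> (\<forall>x. x \<notin> carrier L \<longrightarrow> f x = 0)
      \<and> (\<forall>x\<in>carrier L. \<forall>y\<in>carrier L. f (x \<otimes>\<^bsub>L\<^esub> y) = qz_add (f x) (f y))}"

definition dual_add :: "('a, 'b) monoid_scheme \<Rightarrow> ('a \<Rightarrow> rat) \<Rightarrow> ('a \<Rightarrow> rat) \<Rightarrow> ('a \<Rightarrow> rat)" where
  "dual_add L f g = (\<lambda>x. if x \<in> carrier L then qz_add (f x) (g x) else 0)"

definition tor_dual :: "('a, 'b) monoid_scheme \<Rightarrow> ('a \<Rightarrow> rat) set" where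
  "tor_dual L = {f \<in> pontryagin_dual L. \<exists>n::nat. n > 0 \<and> (\<forall>x\<in>carrier L. frac (of_nat n * f x) = 0)}"

definition divisible_primes :: "('a, 'b) monoid_scheme \<Rightarrow> nat set" where
  "divisible_primes L = {p. prime p \<and> (\<forall>x\<in>carrier L. \<exists>y\<in>carrier L. y [^]\<^bsub>L\<^esub> p = x)}"

definition mu_S :: "nat set \<Rightarrow> rat set" where
  "mu_S S = {r \<in> QZ. \<forall>p\<in>S. coprime p (qz_den r)}"

definition dual_map :: "('a, 'b) monoid_scheme \<Rightarrow> ('a \<Rightarrow> nat \<Rightarrow> int) \<Rightarrow> rat \<Rightarrow> ('a \<Rightarrow> rat)" where
  "dual_map L \<xi> r = (\<lambda>x. if x \<in> carrier L then zhat_act (\<xi> x) r else 0)"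

end

theory Submission
  imports Defs
begin

locale rk1 = comm_group L for L (structure) +
  assumes tf: "\<lbrakk>x \<in> carrier L; n > 0; x [^] (n::nat) = \<one>\<rbrakk> \<Longrightarrow> x = \<one>"
  and rk: "\<lbrakk>x \<in> carrier L; y \<in> carrier L\<rbrakk> \<Longrightarrow> \<exists>(m::int) (n::int). (m \<noteq> 0 \<or> n \<noteq> 0) \<and> x [^] m \<otimes> y [^] n = \<one>"
begin

definition pd :: "nat \<Rightarrow> 'a \<Rightarrow> bool" where
  "pd n x \<longleftrightarrow> (\<exists>y\<in>carrier L. x = y [^] (int n))"

lemma tf_int:
  assumes x: "x \<in> carrier L" and k: "k \<noteq> 0" and e: "x [^] (k::int) = \<one>"
  shows "x = \<one>"
proof -
  have e2: "x [^] (-k) = \<one>" using e x by (simp add: int_pow_neg)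
  have "x [^] \<bar>k\<bar> = \<one>" using e e2 by (cases "k \<ge> 0") auto
  hence "x [^] (nat \<bar>k\<bar>) = \<one>" by (simp add: pow_nat)
  thus ?thesis using tf[OF x, of "nat \<bar>k\<bar>"] k by simp
qed

lemma root_uniq:
  assumes x: "x \<in> carrier L" and y: "y \<in> carrier L" and d: "d \<noteq> 0"
    and e: "x [^] (d::int) = y [^] d"
  shows "x = y"
proof -
  have "(x \<otimes> inv y) [^] d = x [^] d \<otimes> inv (y [^] d)"
    using x y by (simp add: int_pow_distrib int_pow_inv)
  also have "\<dots> = \<one>" using e y by simp
  finally have "x \<otimes> inv y = \<one>" using tf_int x y d by simp
  thus ?thesis using x y by (metis inv_equality inv_inv inv_closed)
qed

lemma pd_closed: "pd n a \<Longrightarrow> a \<in> carrier L"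
  unfolding pd_def by auto

lemma pd_mult: "pd n a \<Longrightarrow> pd n b \<Longrightarrow> pd n (a \<otimes> b)"
  unfolding pd_def by (metis int_pow_distrib m_closed)

lemma pd_inv: "pd n a \<Longrightarrow> pd n (inv a)"
  unfolding pd_def by (metis int_pow_inv inv_closed)

lemma pd_pow: "x \<in> carrier L \<Longrightarrow> pd n (x [^] (int n * k))"
  unfolding pd_def by (metis int_pow_pow int_pow_closed mult.commute)

lemma pd_one: "pd n \<one>"
  unfolding pd_def by (metis int_pow_one one_closed)

lemma pd_self: "x \<in> carrier L \<Longrightarrow> pd 1 x"
  unfolding pd_def by (metis int_pow_1 of_nat_1)

lemma pd_nat: "pd n x \<longleftrightarrow> (\<exists>y\<in>carrier L. y [^] n = x)"
  unfolding pd_def by (metis int_pow_int)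

lemma bez:
  assumes p: "prime p" and x: "x \<in> carrier L" and h: "pd p (x [^] (k::int))"
    and nd: "\<not> int p dvd k"
  shows "pd p x"
proof -
  have "coprime k (int p)" using p nd
    by (metis prime_imp_coprime prime_nat_int_transfer coprime_commute)
  then obtain u v where uv: "u * k + v * int p = 1"
    using bezout_int[of k "int p"] by (metis coprime_iff_gcd_eq_1)
  obtain z where z: "z \<in> carrier L" "x [^] k = z [^] int p" using h unfolding pd_def by auto
  have "x = x [^] (u * k + v * int p)" using uv x by simp
  also have "\<dots> = (x [^] k) [^] u \<otimes> x [^] (int p * v)"
    using x by (simp add: int_pow_mult int_pow_pow mult.commute)
  also have "(x [^] k) [^] u = z [^] (int p * u)" using z by (simp add: int_pow_pow)
  finally have "x = z [^] (int p * u) \<otimes> x [^] (int p * v)" .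
  thus ?thesis using pd_mult pd_pow z x by metis
qed

lemma no_common_prime_coprime:
  assumes n: "n > 0" and h: "\<And>p. prime p \<Longrightarrow> p dvd n \<Longrightarrow> \<not> int p dvd b"
  shows "coprime b (int n)"
proof (rule ccontr)
  assume nc: "\<not> coprime b (int n)"
  define c where "c = gcd b (int n)"
  have c0: "c > 0" using n by (simp add: c_def)
  have "c \<noteq> 1" using nc by (simp add: c_def coprime_iff_gcd_eq_1)
  hence "nat c \<noteq> 1" using c0 by simp
  then obtain p where pp: "prime p" "p dvd nat c" using prime_factor_nat by blast
  have "int p dvd int (nat c)" using pp(2) int_dvd_int_iff by blast
  hence "int p dvd c" using c0 by simp
  hence "int p dvd b" "int p dvd int n" by (auto simp: c_def intro: dvd_trans)
  thus False using h pp by simp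
qed

lemma cyc_a:
  assumes g: "g \<in> carrier L" and n: "n > 0"
    and ng: "\<And>p. prime p \<Longrightarrow> p dvd n \<Longrightarrow> \<not> pd p g"
    and x: "x \<in> carrier L"
  shows "\<exists>k::int. \<exists>y\<in>carrier L. x = g [^] k \<otimes> y [^] (int n)"
proof (cases "n = 1")
  case True
  have "x = g [^] (0::int) \<otimes> x [^] (int n)" using True x g by simp
  thus ?thesis using x by blast
next
  case False
  then obtain p0 where p0: "prime p0" "p0 dvd n" using prime_factor_nat by blast
  have g1: "g \<noteq> \<one>" using ng[OF p0] pd_one by auto
  obtain m m' :: int where mm: "m \<noteq> 0 \<or> m' \<noteq> 0" "x [^] m \<otimes> g [^] m' = \<one>"
    using rk[OF x g] by blast
  have m0: "m \<noteq> 0"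
  proof
    assume "m = 0"
    hence "g [^] m' = \<one>" "m' \<noteq> 0" using mm g by auto
    thus False using tf_int g g1 by blast
  qed
  define a where "a = - m'"
  define b where "b = m"
  have "inv (g [^] m') = x [^] m" using inv_equality[OF mm(2)] x g by simp
  hence xb: "x [^] b = g [^] a" using int_pow_neg[OF g, of m'] unfolding a_def b_def by simp
  define d where "d = gcd a b"
  have d0: "d > 0" using m0 by (simp add: d_def b_def)
  define a' where "a' = a div d"
  define b' where "b' = b div d"
  have aa: "a = d * a'" by (simp add: a'_def d_def)
  have bb: "b = d * b'" by (simp add: b'_def d_def)
  have cop: "coprime a' b'" unfolding a'_def b'_def d_def
    by (rule div_gcd_coprime) (use m0 b_def in simp)
  have "(x [^] b') [^] d = x [^] (b' * d)" by (rule int_pow_pow[OF x])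
  also have "b' * d = b" using bb by simp
  also have "x [^] b = g [^] a" by (rule xb)
  also have "a = a' * d" using aa by simp
  also have "g [^] (a' * d) = (g [^] a') [^] d" by (rule int_pow_pow[OF g, symmetric])
  finally have "(x [^] b') [^] d = (g [^] a') [^] d" .
  moreover have "d \<noteq> 0" using d0 by simp
  ultimately have xb': "x [^] b' = g [^] a'" using root_uniq[OF int_pow_closed[OF x] int_pow_closed[OF g]] by blast
  have cop2: "coprime b' (int n)"
  proof (rule no_common_prime_coprime[OF n])
    fix p assume pp: "prime p" "p dvd n"
    show "\<not> int p dvd b'"
    proof
      assume "int p dvd b'"
      then obtain b'' where b'': "b' = int p * b''" by auto
      have "g [^] a' = x [^] (int p * b'')" using xb' b'' by simp
      hence "pd p (g [^] a')" using pd_pow[OF x] by simp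
      moreover have "\<not> int p dvd a'"
      proof
        assume "int p dvd a'"
        hence "int p dvd gcd a' b'" using \<open>int p dvd b'\<close> by simp
        hence "int p dvd 1" using cop by (metis coprime_iff_gcd_eq_1)
        hence "p dvd 1" by (metis int_dvd_int_iff of_nat_1)
        thus False using pp(1) by simp
      qed
      ultimately have "pd p g" using bez pp g by blast
      thus False using ng pp by blast
    qed
  qed
  then obtain u t where ut: "u * b' + t * int n = 1"
    using bezout_int[of b' "int n"] by (metis coprime_iff_gcd_eq_1)
  have "x = x [^] (u * b' + t * int n)" using ut x by simp
  also have "\<dots> = (x [^] b') [^] u \<otimes> (x [^] t) [^] (int n)"
    using x by (simp add: int_pow_mult int_pow_pow mult.commute)
  also have "\<dots> = g [^] (a' * u) \<otimes> (x [^] t) [^] (int n)"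
    using xb' g by (simp add: int_pow_pow)
  finally show ?thesis using x by blast
qed

lemma cyc_b:
  assumes g: "g \<in> carrier L" and n: "n > 0"
    and ng: "\<And>p. prime p \<Longrightarrow> p dvd n \<Longrightarrow> \<not> pd p g"
    and y: "y \<in> carrier L" and e: "g [^] (k::int) = y [^] (int n)"
  shows "int n dvd k"
proof (rule ccontr)
  assume nd: "\<not> int n dvd k"
  define d where "d = gcd k (int n)"
  have d0: "d > 0" using n by (simp add: d_def)
  define k' where "k' = k div d"
  define n' where "n' = int n div d"
  have kk: "k = d * k'" by (simp add: k'_def d_def)
  have nn: "int n = d * n'" by (simp add: n'_def d_def)
  have cop: "coprime k' n'" unfolding k'_def n'_def d_def
    using div_gcd_coprime n by (metis of_nat_0_less_iff less_irrefl)
  have n'0: "n' > 0" using nn d0 n by (metis of_nat_0_less_iff pos_imp_zdiv_pos_iff n'_def zdiv_mono2 zero_less_mult_pos)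
  have "(g [^] k') [^] d = g [^] (k' * d)" by (rule int_pow_pow[OF g])
  also have "k' * d = k" using kk by simp
  also have "g [^] k = y [^] (int n)" by (rule e)
  also have "int n = n' * d" using nn by simp
  also have "y [^] (n' * d) = (y [^] n') [^] d" by (rule int_pow_pow[OF y, symmetric])
  finally have "(g [^] k') [^] d = (y [^] n') [^] d" .
  moreover have "d \<noteq> 0" using d0 by simp
  ultimately have gk: "g [^] k' = y [^] n'" using root_uniq[OF int_pow_closed[OF g] int_pow_closed[OF y]] by blast
  have "n' \<noteq> 1" using nd nn kk by auto
  hence "nat n' \<noteq> 1" using n'0 by simp
  then obtain p where pp: "prime p" "p dvd nat n'" using prime_factor_nat by blast
  have "int p dvd int (nat n')" using pp(2) int_dvd_int_iff by blast
  hence pn': "int p dvd n'" using n'0 by simp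
  hence "int p dvd int n" using nn by simp
  hence pn: "p dvd n" by simp
  obtain n'' where n'': "n' = int p * n''" using pn' by auto
  have "g [^] k' = y [^] (int p * n'')" using gk n'' by simp
  hence "pd p (g [^] k')" using pd_pow[OF y] by simp
  moreover have "\<not> int p dvd k'"
  proof
    assume "int p dvd k'"
    hence "int p dvd gcd k' n'" using pn' by simp
    hence "int p dvd 1" using cop by (metis coprime_iff_gcd_eq_1)
    hence "p dvd 1" by (metis int_dvd_int_iff of_nat_1)
    thus False using pp(1) by simp
  qed
  ultimately have "pd p g" using bez pp g by blast
  thus False using ng pp pn by blast
qed

lemma ex_gen:
  assumes "finite P" and "\<forall>p\<in>P. prime p \<and> (\<exists>x\<in>carrier L. \<not> pd p x)"
  shows "\<exists>g\<in>carrier L. \<forall>p\<in>P. \<not> pd p g"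
  using assms
proof (induction P rule: finite_induct)
  case empty
  then show ?case by auto
next
  case (insert p P)
  then obtain g where g: "g \<in> carrier L" "\<forall>q\<in>P. \<not> pd q g" by auto
  show ?case
  proof (cases "pd p g")
    case False
    thus ?thesis using g by auto
  next
    case True
    obtain x where x: "x \<in> carrier L" "\<not> pd p x" using insert.prems by auto
    have pp: "prime p" using insert.prems by auto
    define N where "N = \<Prod>P"
    define g' where "g' = g \<otimes> x [^] (int N)"
    have g'c: "g' \<in> carrier L" using g x by (simp add: g'_def)
    have "\<forall>q\<in>insert p P. \<not> pd q g'"
    proof
      fix q assume q: "q \<in> insert p P"
      show "\<not> pd q g'"
      proof (cases "q = p")
        case True
        show ?thesis
        proof
          assume "pd q g'"
          hence "pd p (inv g \<otimes> g')" using pd_inv[OF \<open>pd p g\<close>] pd_mult True by blast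
          moreover have "inv g \<otimes> g' = x [^] (int N)" using g x unfolding g'_def
            by (metis inv_closed int_pow_closed l_one l_inv m_assoc)
          ultimately have h: "pd p (x [^] (int N))" by simp
          have "\<not> p dvd N"
          proof
            assume "p dvd N"
            then obtain q' where "q' \<in> P" "p dvd q'"
              using prime_dvd_prod_iff[OF insert.hyps(1) pp] unfolding N_def by auto
            moreover have "prime q'" using insert.prems \<open>q' \<in> P\<close> by auto
            ultimately have "p = q'" using pp primes_dvd_imp_eq by blast
            thus False using insert.hyps(2) \<open>q' \<in> P\<close> by auto
          qed
          hence "\<not> int p dvd int N" by simp
          hence "pd p x" using bez[OF pp x(1) h] by simp
          thus False using x by simp
        qed
      next
        case False
        hence qP: "q \<in> P" using q by auto
        have "q dvd N" unfolding N_def using dvd_prodI[OF insert.hyps(1) qP, of "\<lambda>x. x"] by simp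
        then obtain N' where N': "N = q * N'" by auto
        have px: "pd q (x [^] (int N))" using pd_pow[OF x(1), of q "int N'"] N' by simp
        show ?thesis
        proof
          assume "pd q g'"
          hence "pd q (g' \<otimes> inv (x [^] (int N)))" using pd_mult pd_inv px by blast
          moreover have "g' \<otimes> inv (x [^] (int N)) = g" using g x unfolding g'_def
            by (metis int_pow_closed m_assoc r_inv r_one inv_closed)
          ultimately show False using g qP by auto
        qed
      qed
    qed
    thus ?thesis using g'c by blast
  qed
qed

end

lemma frac_cong: "(x::rat) - y \<in> \<int> \<Longrightarrow> frac x = frac y"
proof -
  assume h: "x - y \<in> \<int>"
  have "x - frac y = (x - y) + of_int \<lfloor>y\<rfloor>" by (simp add: frac_def)
  also have "\<dots> \<in> \<int>" using h by simp
  finally show ?thesis by (simp add: frac_unique_iff frac_lt_1)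
qed

lemma qo_eq: assumes "b > 0" "coprime a b" shows "quotient_of (of_int a / of_int b) = (a, b)"
proof -
  have "of_int a / of_int b = Fract a b" by (simp add: Fract_of_int_quotient)
  thus ?thesis using assms by (simp add: quotient_of_Fract normalize_def)
qed

lemma qz_den_pos: "qz_den r > 0"
  unfolding qz_den_def using quotient_of_denom_pos' by simp

lemma qz_den_int_eq: "int (qz_den r) = snd (quotient_of r)"
  unfolding qz_den_def using quotient_of_denom_pos'[of r] by simp

lemma den_int: "of_nat (qz_den r) * r \<in> \<int>"
proof -
  obtain a b where ab: "quotient_of r = (a, b)" by (cases "quotient_of r")
  have b0: "b > 0" using quotient_of_denom_pos[OF ab] .
  have "r = of_int a / of_int b" using quotient_of_div[OF ab] .
  moreover have "of_nat (qz_den r) = (of_int b :: rat)" using qz_den_int_eq[of r] ab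
    by (metis of_int_of_nat_eq snd_conv)
  ultimately have "of_nat (qz_den r) * r = of_int a" using b0 by simp
  thus ?thesis by simp
qed

lemma den_dvd:
  assumes N: "N > 0" and h: "of_nat N * r \<in> \<int>"
  shows "qz_den r dvd N"
proof -
  obtain a b where ab: "quotient_of r = (a, b)" by (cases "quotient_of r")
  have b0: "b > 0" using quotient_of_denom_pos[OF ab] .
  have cop: "coprime a b" using quotient_of_coprime[OF ab] .
  have r: "r = of_int a / of_int b" using quotient_of_div[OF ab] .
  obtain m where m: "of_nat N * r = of_int m" using h Ints_cases by metis
  hence "of_int (int N * a) = (of_int (m * b) :: rat)" using r b0 by (simp add: field_simps)
  hence "int N * a = m * b" using of_int_eq_iff by blast
  hence "b dvd int N * a" by (metis dvd_triv_right)
  hence "b dvd int N" using cop by (metis coprime_commute coprime_dvd_mult_left_iff)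
  moreover have "int (qz_den r) = b" using qz_den_int_eq[of r] ab by simp
  ultimately show ?thesis by (metis int_dvd_int_iff)
qed

lemma za_N:
  assumes z: "is_zhat z" and N: "N > 0" and dv: "qz_den r dvd N"
  shows "zhat_act z r = frac (of_int (z N) * r)"
proof -
  define d where "d = qz_den r"
  have d0: "d > 0" using qz_den_pos unfolding d_def by blast
  have cmp: "\<forall>m n. 0 < m \<longrightarrow> 0 < n \<longrightarrow> m dvd n \<longrightarrow> z m = z n mod int m"
    using z unfolding is_zhat_def by blast
  have dvN: "d dvd N" using dv unfolding d_def .
  have zd: "z d = z N mod int d" using cmp d0 N dvN by blast
  have e: "z N - z d = int d * (z N div int d)" unfolding zd by (rule minus_mod_eq_mult_div)
  obtain ar where ar: "of_nat d * r = (of_int ar :: rat)" using den_int[of r] Ints_cases unfolding d_def by metis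
  have "of_int (z N) * r - of_int (z d) * r = of_int (z N - z d) * r" by (simp add: algebra_simps)
  also have "\<dots> = of_int (z N div int d) * (of_nat d * r)" unfolding e by (simp add: algebra_simps)
  also have "\<dots> = of_int (z N div int d * ar)" unfolding ar by simp
  finally have "of_int (z N) * r - of_int (z d) * r \<in> \<int>" by simp
  hence "frac (of_int (z N) * r) = frac (of_int (z d) * r)" by (rule frac_cong)
  thus ?thesis unfolding zhat_act_def d_def by simp
qed

lemma den_dvd_frac_add:
  "qz_den (qz_add r s) dvd qz_den r * qz_den s"
proof (rule den_dvd)
  show "qz_den r * qz_den s > 0" using qz_den_pos by simp
  have "of_nat (qz_den r * qz_den s) * qz_add r s
     = of_nat (qz_den s) * (of_nat (qz_den r) * r) + of_nat (qz_den r) * (of_nat (qz_den s) * s)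
       - of_nat (qz_den r * qz_den s) * of_int \<lfloor>r + s\<rfloor>"
    unfolding qz_add_def frac_def by (simp add: algebra_simps)
  also have "\<dots> \<in> \<int>"
  proof -
    obtain ar where ar: "of_nat (qz_den r) * r = (of_int ar :: rat)" using den_int[of r] Ints_cases by metis
    obtain as where as: "of_nat (qz_den s) * s = (of_int as :: rat)" using den_int[of s] Ints_cases by metis
    show ?thesis unfolding ar as by (intro Ints_diff Ints_add Ints_mult Ints_of_nat Ints_of_int)
  qed
  finally show "of_nat (qz_den r * qz_den s) * qz_add r s \<in> \<int>" .
qed

lemma za_add:
  assumes z: "is_zhat z"
  shows "zhat_act z (qz_add r s) = qz_add (zhat_act z r) (zhat_act z s)"
proof -
  define N where "N = qz_den r * qz_den s"
  have N0: "N > 0" using qz_den_pos N_def by simp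
  have 1: "zhat_act z (qz_add r s) = frac (of_int (z N) * qz_add r s)"
    using za_N[OF z N0] den_dvd_frac_add N_def by simp
  have 2: "zhat_act z r = frac (of_int (z N) * r)" using za_N[OF z N0] N_def by simp
  have 3: "zhat_act z s = frac (of_int (z N) * s)" using za_N[OF z N0] N_def by simp
  have "of_int (z N) * qz_add r s - (frac (of_int (z N) * r) + frac (of_int (z N) * s))
     = of_int (\<lfloor>of_int (z N) * r\<rfloor> + \<lfloor>of_int (z N) * s\<rfloor> - z N * \<lfloor>r + s\<rfloor>)"
    unfolding qz_add_def frac_def by (simp add: algebra_simps)
  also have "\<dots> \<in> \<int>" by simp
  finally have "frac (of_int (z N) * qz_add r s) = frac (frac (of_int (z N) * r) + frac (of_int (z N) * s))"
    by (rule frac_cong)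
  thus ?thesis unfolding 1 2 3 by (simp only: qz_add_def)
qed

lemma za_hom:
  assumes a: "is_zhat a" and b: "is_zhat b"
  shows "zhat_act (zhat_add a b) r = qz_add (zhat_act a r) (zhat_act b r)"
proof -
  define d where "d = qz_den r"
  have d0: "d > 0" using qz_den_pos d_def by simp
  have zd: "zhat_add a b d = (a d + b d) mod int d" using d0 unfolding zhat_add_def by simp
  have "of_int (zhat_add a b d) * r - (frac (of_int (a d) * r) + frac (of_int (b d) * r))
     = of_int (\<lfloor>of_int (a d) * r\<rfloor> + \<lfloor>of_int (b d) * r\<rfloor>) - of_int ((a d + b d) div int d) * (of_nat d * r)"
    unfolding zd frac_def by (simp add: algebra_simps mod_div_mult_eq minus_div_mult_eq_mod[symmetric])
  also have "\<dots> \<in> \<int>"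
  proof -
    obtain ar where ar: "of_nat d * r = (of_int ar :: rat)" using den_int[of r] d_def Ints_cases by metis
    show ?thesis unfolding ar by (intro Ints_diff Ints_add Ints_mult Ints_of_nat Ints_of_int)
  qed
  finally have "frac (of_int (zhat_add a b d) * r) = frac (frac (of_int (a d) * r) + frac (of_int (b d) * r))"
    by (rule frac_cong)
  thus ?thesis unfolding zhat_act_def qz_add_def d_def by simp
qed

lemma za_zero: "zhat_act z 0 = 0"
  unfolding zhat_act_def by simp

lemma za_QZ: "zhat_act z r \<in> QZ"
  unfolding zhat_act_def QZ_def by (simp add: frac_lt_1)

lemma za_tor: "frac (of_nat (qz_den r) * zhat_act z r) = 0"
proof -
  have "of_nat (qz_den r) * zhat_act z r = of_int (z (qz_den r)) * (of_nat (qz_den r) * r) - of_nat (qz_den r) * of_int \<lfloor>of_int (z (qz_den r)) * r\<rfloor>"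
    unfolding zhat_act_def frac_def by (simp add: algebra_simps)
  also have "\<dots> \<in> \<int>"
  proof -
    obtain ar where ar: "of_nat (qz_den r) * r = (of_int ar :: rat)" using den_int[of r] Ints_cases by metis
    show ?thesis unfolding ar by (intro Ints_diff Ints_add Ints_mult Ints_of_nat Ints_of_int)
  qed
  finally show ?thesis by simp
qed

context rk1 begin

definition mhom :: "nat \<Rightarrow> ('a \<Rightarrow> int) \<Rightarrow> bool" where
  "mhom n h \<longleftrightarrow> (\<forall>x\<in>carrier L. \<forall>y\<in>carrier L. int n dvd h (x \<otimes> y) - (h x + h y))"

lemma mhom_one:
  assumes "mhom n h" shows "int n dvd h \<one>"
proof -
  have "int n dvd h (\<one> \<otimes> \<one>) - (h \<one> + h \<one>)" using assms unfolding mhom_def by blast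
  hence "int n dvd - h \<one>" by simp
  thus ?thesis by simp
qed

lemma mhom_nat:
  assumes h: "mhom n h" and x: "x \<in> carrier L"
  shows "int n dvd h (x [^] (k::nat)) - int k * h x"
proof (induction k)
  case 0
  then show ?case using mhom_one[OF h] by simp
next
  case (Suc k)
  have "int n dvd h (x [^] k \<otimes> x) - (h (x [^] k) + h x)" using h x unfolding mhom_def by simp
  hence "int n dvd (h (x [^] k \<otimes> x) - (h (x [^] k) + h x)) + (h (x [^] k) - int k * h x)"
    using Suc.IH by (rule dvd_add)
  thus ?case by (simp add: algebra_simps)
qed

lemma mhom_inv:
  assumes h: "mhom n h" and x: "x \<in> carrier L"
  shows "int n dvd h (inv x) + h x"
proof -
  have "int n dvd h (inv x \<otimes> x) - (h (inv x) + h x)" using h x unfolding mhom_def by (meson inv_closed)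
  moreover have "inv x \<otimes> x = \<one>" using x by simp
  ultimately have d1: "int n dvd h \<one> - (h (inv x) + h x)" by simp
  have "int n dvd h \<one> - (h \<one> - (h (inv x) + h x))" by (rule dvd_diff[OF mhom_one[OF h] d1])
  thus ?thesis by simp
qed

lemma mhom_int:
  assumes h: "mhom n h" and x: "x \<in> carrier L"
  shows "int n dvd h (x [^] (k::int)) - k * h x"
proof (cases "k \<ge> 0")
  case True
  have e: "x [^] (nat k) = x [^] k" by (rule pow_nat[OF True])
  have i: "int (nat k) = k" using True by simp
  show ?thesis using mhom_nat[OF h x, of "nat k"] unfolding e i .
next
  case False
  define j where "j = nat (-k)"
  have kj: "k = - int j" using False j_def by simp
  have e: "x [^] k = inv (x [^] j)" unfolding kj by (rule int_pow_neg_int[OF x])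
  have 1: "int n dvd h (inv (x [^] j)) + h (x [^] j)" using mhom_inv[OF h nat_pow_closed[OF x]] .
  have 2: "int n dvd h (x [^] j) - int j * h x" using mhom_nat[OF h x] .
  have "int n dvd (h (inv (x [^] j)) + h (x [^] j)) - (h (x [^] j) - int j * h x)"
    by (rule dvd_diff[OF 1 2])
  moreover have "(h (inv (x [^] j)) + h (x [^] j)) - (h (x [^] j) - int j * h x) = h (x [^] k) - k * h x"
    unfolding e by (simp add: kj algebra_simps)
  ultimately show ?thesis by simp
qed

lemma mhom_gen:
  assumes h: "mhom n h" and g: "g \<in> carrier L" and y: "y \<in> carrier L"
  shows "int n dvd h (g [^] (k::int) \<otimes> y [^] (int n)) - k * h g"
proof -
  have 1: "int n dvd h (g [^] k \<otimes> y [^] (int n)) - (h (g [^] k) + h (y [^] (int n)))"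
    using h g y unfolding mhom_def by simp
  have 2: "int n dvd h (g [^] k) - k * h g" using mhom_int[OF h g] .
  have 3: "int n dvd h (y [^] (int n)) - int n * h y" using mhom_int[OF h y] .
  have 4: "int n dvd int n * h y" by simp
  have "int n dvd (h (g [^] k \<otimes> y [^] (int n)) - (h (g [^] k) + h (y [^] (int n))))
     + (h (g [^] k) - k * h g) + (h (y [^] (int n)) - int n * h y) + int n * h y"
    using 1 2 3 4 by (intro dvd_add)
  thus ?thesis by (simp add: algebra_simps)
qed

end

lemma frac_eq_diff: "frac (x::rat) = frac y \<Longrightarrow> x - y \<in> \<int>"
proof -
  assume "frac x = frac y"
  hence "x - y = of_int (\<lfloor>x\<rfloor> - \<lfloor>y\<rfloor>)" unfolding frac_def by simp
  thus ?thesis by simp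
qed

context rk1 begin

lemma S_iff: "p \<in> divisible_primes L \<longleftrightarrow> prime p \<and> (\<forall>x\<in>carrier L. pd p x)"
  unfolding divisible_primes_def pd_nat by auto

definition UU :: "('a \<Rightarrow> nat \<Rightarrow> int) \<Rightarrow> bool" where
  "UU \<xi> \<longleftrightarrow> (\<forall>p. prime p \<longrightarrow> p \<notin> divisible_primes L \<longrightarrow> (\<exists>x\<in>carrier L. \<not> int p dvd \<xi> x p))"

lemma zh_is: "zhat_hom L \<xi> \<Longrightarrow> x \<in> carrier L \<Longrightarrow> is_zhat (\<xi> x)"
  unfolding zhat_hom_def by auto

lemma zh_range: "zhat_hom L \<xi> \<Longrightarrow> x \<in> carrier L \<Longrightarrow> n > 0 \<Longrightarrow> 0 \<le> \<xi> x n \<and> \<xi> x n < int n"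
  using zh_is unfolding is_zhat_def by blast

lemma dvd_mod_diff: "int n dvd a mod int n - a"
  by (metis dvd_minus_mod dvd_minus_iff minus_diff_eq)

lemma zh_red:
  assumes xi: "zhat_hom L \<xi>" and x: "x \<in> carrier L" and m: "m > 0" and n: "n > 0" and mn: "m dvd n"
  shows "int m dvd \<xi> x n - \<xi> x m"
proof -
  have "\<xi> x m = \<xi> x n mod int m" using zh_is[OF xi x] m n mn unfolding is_zhat_def by blast
  thus ?thesis by (simp add: dvd_minus_mod)
qed

lemma zh_mhom: assumes xi: "zhat_hom L \<xi>" and n: "n > 0" shows "mhom n (\<lambda>x. \<xi> x n)"
  unfolding mhom_def
proof (intro ballI)
  fix x y assume "x \<in> carrier L" "y \<in> carrier L"
  hence "\<xi> (x \<otimes> y) n = (\<xi> x n + \<xi> y n) mod int n" using xi n unfolding zhat_hom_def zhat_add_def by auto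
  thus "int n dvd \<xi> (x \<otimes> y) n - (\<xi> x n + \<xi> y n)" using dvd_mod_diff by simp
qed

lemma dm_in_tor:
  assumes xi: "zhat_hom L \<xi>"
  shows "dual_map L \<xi> r \<in> tor_dual L"
proof -
  have "dual_map L \<xi> r \<in> pontryagin_dual L"
    unfolding pontryagin_dual_def dual_map_def
    using xi za_QZ za_hom zh_is by (auto simp: zhat_hom_def)
  moreover have "\<forall>x\<in>carrier L. frac (of_nat (qz_den r) * dual_map L \<xi> r x) = 0"
    unfolding dual_map_def using za_tor by simp
  ultimately show ?thesis unfolding tor_dual_def using qz_den_pos by blast
qed

lemma dm_add:
  assumes xi: "zhat_hom L \<xi>"
  shows "dual_map L \<xi> (qz_add r s) = dual_add L (dual_map L \<xi> r) (dual_map L \<xi> s)"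
  unfolding dual_map_def dual_add_def by (rule ext) (auto simp: za_add zh_is[OF xi])

lemma partC:
  assumes xi: "zhat_hom L \<xi>" and inj: "inj_on (dual_map L \<xi>) (mu_S (divisible_primes L))"
  shows "UU \<xi>"
  unfolding UU_def
proof (intro allI impI)
  fix p assume p: "prime p" and pS: "p \<notin> divisible_primes L"
  show "\<exists>x\<in>carrier L. \<not> int p dvd \<xi> x p"
  proof (rule ccontr)
    assume "\<not> ?thesis"
    hence allp: "\<forall>x\<in>carrier L. int p dvd \<xi> x p" by auto
    define r :: rat where "r = of_int 1 / of_int (int p)"
    have p2: "p \<ge> 2" using p prime_ge_2_nat by auto
    have qr: "quotient_of r = (1, int p)" unfolding r_def by (rule qo_eq) (use p2 in auto)
    have dr: "qz_den r = p" unfolding qz_den_def qr by simp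
    have rmu: "r \<in> mu_S (divisible_primes L)"
      unfolding mu_S_def QZ_def
    proof (intro CollectI conjI ballI)
      show "0 \<le> r" unfolding r_def by simp
      show "r < 1" unfolding r_def using p2 by simp
      fix q assume q: "q \<in> divisible_primes L"
      hence "prime q" "q \<noteq> p" using pS unfolding divisible_primes_def by auto
      thus "coprime q (qz_den r)" unfolding dr using p primes_coprime by blast
    qed
    have 0: "0 \<in> mu_S (divisible_primes L)" unfolding mu_S_def QZ_def qz_den_def by simp
    have "dual_map L \<xi> r = dual_map L \<xi> 0"
    proof (rule ext)
      fix x show "dual_map L \<xi> r x = dual_map L \<xi> 0 x"
      proof (cases "x \<in> carrier L")
        case True
        obtain c where c: "\<xi> x p = int p * c" using allp True by (auto elim: dvdE)
        have "zhat_act (\<xi> x) r = frac (of_int (\<xi> x p) * r)" unfolding zhat_act_def dr ..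
        also have "of_int (\<xi> x p) * r = of_int c" unfolding c r_def using p2 by simp
        finally show ?thesis unfolding dual_map_def using True za_zero by simp
      qed (simp add: dual_map_def)
    qed
    hence "r = 0" using inj_onD[OF inj _ rmu 0] by blast
    thus False unfolding r_def using p2 by simp
  qed
qed

lemma partD_inj:
  assumes xi: "zhat_hom L \<xi>" and U: "UU \<xi>"
  shows "inj_on (dual_map L \<xi>) (mu_S (divisible_primes L))"
proof (rule inj_onI)
  fix r s assume r: "r \<in> mu_S (divisible_primes L)" and s: "s \<in> mu_S (divisible_primes L)"
    and e: "dual_map L \<xi> r = dual_map L \<xi> s"
  define N where "N = qz_den r * qz_den s"
  have N0: "N > 0" using qz_den_pos N_def by simp
  have intx: "of_int (\<xi> x N) * (r - s) \<in> \<int>" if x: "x \<in> carrier L" for x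
  proof -
    have "zhat_act (\<xi> x) r = zhat_act (\<xi> x) s" using fun_cong[OF e, of x] x unfolding dual_map_def by simp
    hence "frac (of_int (\<xi> x N) * r) = frac (of_int (\<xi> x N) * s)"
      using za_N[OF zh_is[OF xi x] N0] N_def by simp
    hence "of_int (\<xi> x N) * r - of_int (\<xi> x N) * s \<in> \<int>" by (rule frac_eq_diff)
    thus ?thesis by (simp add: right_diff_distrib)
  qed
  obtain a b where ab: "quotient_of (r - s) = (a, b)" by (cases "quotient_of (r - s)")
  have b0: "b > 0" using quotient_of_denom_pos[OF ab] .
  have cop: "coprime a b" using quotient_of_coprime[OF ab] .
  have rs: "r - s = of_int a / of_int b" using quotient_of_div[OF ab] .
  have bint: "int (qz_den (r - s)) = b" using qz_den_int_eq[of "r - s"] ab by simp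
  have "of_nat N * (r - s) \<in> \<int>"
  proof -
    have "of_nat N * (r - s) = of_nat (qz_den s) * (of_nat (qz_den r) * r) - of_nat (qz_den r) * (of_nat (qz_den s) * s)"
      unfolding N_def by (simp add: algebra_simps)
    also have "\<dots> \<in> \<int>"
    proof -
      obtain ar where ar: "of_nat (qz_den r) * r = (of_int ar :: rat)" using den_int[of r] Ints_cases by metis
      obtain as where as: "of_nat (qz_den s) * s = (of_int as :: rat)" using den_int[of s] Ints_cases by metis
      show ?thesis unfolding ar as by (intro Ints_diff Ints_add Ints_mult Ints_of_nat Ints_of_int)
    qed
    finally show ?thesis .
  qed
  hence "qz_den (r - s) dvd N" using den_dvd N0 by blast
  hence bN: "b dvd int N" using bint by (metis int_dvd_int_iff)
  have bx: "b dvd \<xi> x N" if x: "x \<in> carrier L" for x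
  proof -
    obtain m where m: "of_int (\<xi> x N) * (r - s) = of_int m" using intx[OF x] Ints_cases by metis
    hence "of_int (\<xi> x N * a) = (of_int (m * b) :: rat)" using rs b0 by (simp add: field_simps)
    hence "\<xi> x N * a = m * b" using of_int_eq_iff by blast
    hence "b dvd \<xi> x N * a" by (metis dvd_triv_right)
    thus ?thesis using cop by (metis coprime_commute coprime_dvd_mult_left_iff)
  qed
  show "r = s"
  proof (cases "b = 1")
    case True
    hence ra: "r - s = of_int a" using rs by simp
    have "-1 < r - s" "r - s < 1" using r s unfolding mu_S_def QZ_def by auto
    hence "-1 < a" "a < 1" unfolding ra by simp_all
    hence "a = 0" by simp
    thus ?thesis using ra by simp
  next
    case False
    hence "nat b \<noteq> 1" using b0 by simp
    then obtain p where p: "prime p" "p dvd nat b" using prime_factor_nat by blast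
    have "int p dvd int (nat b)" using p(2) int_dvd_int_iff by blast
    hence pb: "int p dvd b" using b0 by simp
    have pN: "p dvd N" using dvd_trans[OF pb bN] by (metis int_dvd_int_iff)
    have pS: "p \<notin> divisible_primes L"
    proof
      assume pS: "p \<in> divisible_primes L"
      have "coprime p (qz_den r)" "coprime p (qz_den s)" using r s pS unfolding mu_S_def by auto
      hence "coprime p N" unfolding N_def by simp
      hence "is_unit p" using pN coprime_common_divisor[of p N p] by auto
      thus False using p(1) by simp
    qed
    obtain x where x: "x \<in> carrier L" "\<not> int p dvd \<xi> x p" using U p(1) pS unfolding UU_def by blast
    have 1: "int p dvd \<xi> x N" using dvd_trans[OF pb bx[OF x(1)]] .
    have 2: "int p dvd \<xi> x N - \<xi> x p" using zh_red[OF xi x(1) prime_gt_0_nat[OF p(1)] N0 pN] .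
    have "int p dvd \<xi> x N - (\<xi> x N - \<xi> x p)" using 1 2 by (rule dvd_diff)
    hence "int p dvd \<xi> x p" by simp
    thus ?thesis using x(2) by simp
  qed
qed

end

context rk1 begin

lemma f_pow:
  assumes f: "f \<in> pontryagin_dual L" and y: "y \<in> carrier L"
  shows "f (y [^] (k::nat)) - of_nat k * f y \<in> \<int>"
proof (induction k)
  case 0
  have h: "f \<one> = qz_add (f \<one>) (f \<one>)"
    using f unfolding pontryagin_dual_def by (metis (mono_tags, lifting) one_closed l_one mem_Collect_eq)
  hence "f \<one> = f \<one> + f \<one> - of_int \<lfloor>f \<one> + f \<one>\<rfloor>" unfolding qz_add_def frac_def .
  hence "f \<one> = of_int \<lfloor>f \<one> + f \<one>\<rfloor>" by linarith
  hence "f \<one> \<in> \<int>" by (metis Ints_of_int)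
  thus ?case by simp
next
  case (Suc k)
  have "f (y [^] Suc k) = qz_add (f (y [^] k)) (f y)"
    using f y unfolding pontryagin_dual_def by simp
  hence "f (y [^] Suc k) - of_nat (Suc k) * f y = (f (y [^] k) - of_nat k * f y) - of_int \<lfloor>f (y [^] k) + f y\<rfloor>"
    unfolding qz_add_def frac_def by (simp add: algebra_simps)
  also have "\<dots> \<in> \<int>" by (rule Ints_diff[OF Suc.IH Ints_of_int])
  finally show ?case .
qed

lemma tor_order:
  assumes f: "f \<in> tor_dual L"
  shows "\<exists>n>0. (\<forall>q\<in>divisible_primes L. coprime q n) \<and> (\<forall>x\<in>carrier L. of_nat n * f x \<in> \<int>)"
proof -
  have fp: "f \<in> pontryagin_dual L" using f unfolding tor_dual_def by auto
  define P where "P n \<longleftrightarrow> n > 0 \<and> (\<forall>x\<in>carrier L. of_nat n * f x \<in> \<int>)" for n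
  have "\<exists>n. P n" using f unfolding tor_dual_def P_def by auto
  define n0 where "n0 = (LEAST n. P n)"
  have Pn0: "P n0" unfolding n0_def by (rule LeastI_ex) fact
  have "\<forall>q\<in>divisible_primes L. coprime q n0"
  proof
    fix q assume q: "q \<in> divisible_primes L"
    hence qp: "prime q" and qd: "\<forall>x\<in>carrier L. pd q x" using S_iff by auto
    show "coprime q n0"
    proof (rule ccontr)
      assume "\<not> coprime q n0"
      hence "q dvd n0" using prime_imp_coprime qp by blast
      then obtain m where m: "n0 = q * m" by auto
      have m0: "m > 0" using Pn0 m unfolding P_def by (cases m) auto
      have q2: "q \<ge> 2" using prime_ge_2_nat[OF qp] .
      have mlt: "m < n0" using m m0 q2 by (metis One_nat_def less_le_trans lessI mult_less_cancel2 mult.commute mult_1_right one_less_numeral_iff semiring_norm(76) numeral_le_one_iff)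
      have "P m"
        unfolding P_def
      proof (intro conjI ballI m0)
        fix x assume x: "x \<in> carrier L"
        obtain y where y: "y \<in> carrier L" "x = y [^] (int q)" using qd x unfolding pd_def by auto
        have "x = y [^] q" using y by (simp add: int_pow_int)
        hence i1: "f x - of_nat q * f y \<in> \<int>" using f_pow[OF fp y(1)] by simp
        have i2: "of_nat n0 * f y \<in> \<int>" using Pn0 y unfolding P_def by auto
        have "of_nat m * f x = of_nat m * (f x - of_nat q * f y) + of_nat n0 * f y" using m by (simp add: algebra_simps)
        also have "\<dots> \<in> \<int>" by (rule Ints_add[OF Ints_mult[OF Ints_of_nat i1] i2])
        finally show "of_nat m * f x \<in> \<int>" .
      qed
      moreover have "\<not> P m" using not_less_Least[of m P] mlt unfolding n0_def by blast
      ultimately show False by simp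
    qed
  qed
  thus ?thesis using Pn0 unfolding P_def by blast
qed

lemma gen_for:
  assumes n0: "n > 0" and cop: "\<forall>q\<in>divisible_primes L. coprime q n"
  shows "\<exists>g\<in>carrier L. \<forall>x\<in>carrier L. \<exists>k::int. \<exists>y\<in>carrier L. x = g [^] k \<otimes> y [^] (int n)"
proof -
  let ?P = "{p. prime p \<and> p dvd n}"
  have fin: "finite ?P"
    by (rule finite_subset[of _ "{..n}"]) (use n0 in \<open>auto dest: dvd_imp_le\<close>)
  have "\<forall>p\<in>?P. prime p \<and> (\<exists>x\<in>carrier L. \<not> pd p x)"
  proof
    fix p assume "p \<in> ?P"
    hence p: "prime p" "p dvd n" by auto
    have "p \<notin> divisible_primes L"
    proof
      assume "p \<in> divisible_primes L"
      hence "coprime p n" using cop by auto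
      hence "is_unit p" using p(2) coprime_common_divisor[of p n p] by auto
      thus False using p(1) by simp
    qed
    thus "prime p \<and> (\<exists>x\<in>carrier L. \<not> pd p x)" using p(1) S_iff by auto
  qed
  then obtain g where g: "g \<in> carrier L" "\<forall>p\<in>?P. \<not> pd p g" using ex_gen[OF fin] by blast
  have "\<forall>x\<in>carrier L. \<exists>k::int. \<exists>y\<in>carrier L. x = g [^] k \<otimes> y [^] (int n)"
  proof
    fix x assume x: "x \<in> carrier L"
    show "\<exists>k::int. \<exists>y\<in>carrier L. x = g [^] k \<otimes> y [^] (int n)"
      by (rule cyc_a[OF g(1) n0 _ x]) (use g(2) in auto)
  qed
  thus ?thesis using g(1) by blast
qed

lemma unit_gen:
  assumes xi: "zhat_hom L \<xi>" and U: "UU \<xi>" and n0: "n > 0"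
    and cop: "\<forall>q\<in>divisible_primes L. coprime q n" and g: "g \<in> carrier L"
    and gen: "\<forall>x\<in>carrier L. \<exists>k::int. \<exists>y\<in>carrier L. x = g [^] k \<otimes> y [^] (int n)"
  shows "coprime (\<xi> g n) (int n)"
proof (rule no_common_prime_coprime[OF n0])
  fix p assume p: "prime p" "p dvd n"
  show "\<not> int p dvd \<xi> g n"
  proof
    assume pg: "int p dvd \<xi> g n"
    have "p \<notin> divisible_primes L"
    proof
      assume "p \<in> divisible_primes L"
      hence "coprime p n" using cop by auto
      hence "is_unit p" using p(2) coprime_common_divisor[of p n p] by auto
      thus False using p(1) by simp
    qed
    then obtain x where x: "x \<in> carrier L" "\<not> int p dvd \<xi> x p" using U p(1) unfolding UU_def by blast
    have "\<exists>k::int. \<exists>y\<in>carrier L. x = g [^] k \<otimes> y [^] (int n)" using gen x(1) by (rule bspec)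
    then obtain k :: int where "\<exists>y\<in>carrier L. x = g [^] k \<otimes> y [^] (int n)" ..
    then obtain y where y: "y \<in> carrier L" and xe: "x = g [^] k \<otimes> y [^] (int n)" ..
    have d1: "int n dvd \<xi> x n - k * \<xi> g n" using mhom_gen[OF zh_mhom[OF xi n0] g y, of k] unfolding xe[symmetric] .
    have pn: "int p dvd int n" using p(2) by simp
    have d2: "int p dvd \<xi> x n - k * \<xi> g n" using dvd_trans[OF pn d1] .
    have d3: "int p dvd k * \<xi> g n" using pg by simp
    have "int p dvd (\<xi> x n - k * \<xi> g n) + k * \<xi> g n" by (rule dvd_add[OF d2 d3])
    hence d4: "int p dvd \<xi> x n" by simp
    have d5: "int p dvd \<xi> x n - \<xi> x p" using zh_red[OF xi x(1) prime_gt_0_nat[OF p(1)] n0 p(2)] .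
    have "int p dvd \<xi> x n - (\<xi> x n - \<xi> x p)" by (rule dvd_diff[OF d4 d5])
    thus False using x(2) by simp
  qed
qed

end

context rk1 begin

lemma partD_surj:
  assumes xi: "zhat_hom L \<xi>" and U: "UU \<xi>" and f: "f \<in> tor_dual L"
  shows "\<exists>r\<in>mu_S (divisible_primes L). f = dual_map L \<xi> r"
proof -
  obtain n where n0: "n > 0" and cop: "\<forall>q\<in>divisible_primes L. coprime q n"
    and nf: "\<forall>x\<in>carrier L. of_nat n * f x \<in> \<int>"
    using tor_order[OF f] by blast
  have fp: "f \<in> pontryagin_dual L" using f unfolding tor_dual_def by auto
  obtain g where g: "g \<in> carrier L"
    and gen: "\<forall>x\<in>carrier L. \<exists>k::int. \<exists>y\<in>carrier L. x = g [^] k \<otimes> y [^] (int n)"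
    using gen_for[OF n0 cop] by blast
  have gu: "coprime (\<xi> g n) (int n)" using unit_gen[OF xi U n0 cop g gen] .
  obtain u v where uv: "u * \<xi> g n + v * int n = 1"
    using bezout_int[of "\<xi> g n" "int n"] gu by (metis coprime_iff_gcd_eq_1)
  define \<phi> where "\<phi> x = \<lfloor>of_nat n * f x\<rfloor>" for x
  have \<phi>e: "of_nat n * f x = of_int (\<phi> x)" if "x \<in> carrier L" for x
    using nf that unfolding \<phi>_def by (metis Ints_cases floor_of_int)
  have \<phi>m: "mhom n \<phi>"
    unfolding mhom_def
  proof (intro ballI)
    fix x y assume x: "x \<in> carrier L" and y: "y \<in> carrier L"
    have "f (x \<otimes> y) = qz_add (f x) (f y)" using fp x y unfolding pontryagin_dual_def by auto
    hence e1: "f (x \<otimes> y) = f x + f y - of_int \<lfloor>f x + f y\<rfloor>" unfolding qz_add_def frac_def .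
    have "of_nat n * f (x \<otimes> y) = of_nat n * f x + of_nat n * f y - of_nat n * of_int \<lfloor>f x + f y\<rfloor>"
      unfolding e1 by (simp add: algebra_simps)
    hence "of_int (\<phi> (x \<otimes> y)) = (of_int (\<phi> x + \<phi> y - int n * \<lfloor>f x + f y\<rfloor>) :: rat)"
      using \<phi>e[OF x] \<phi>e[OF y] \<phi>e[OF m_closed[OF x y]] by simp
    hence "\<phi> (x \<otimes> y) = \<phi> x + \<phi> y - int n * \<lfloor>f x + f y\<rfloor>" by (simp only: of_int_eq_iff)
    hence "\<phi> (x \<otimes> y) - (\<phi> x + \<phi> y) = int n * (- \<lfloor>f x + f y\<rfloor>)" by simp
    thus "int n dvd \<phi> (x \<otimes> y) - (\<phi> x + \<phi> y)" by simp
  qed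
  define t where "t = (u * \<phi> g) mod int n"
  define r :: rat where "r = of_int t / of_nat n"
  have t0: "0 \<le> t" "t < int n" using n0 unfolding t_def by auto
  have nr: "of_nat n * r = of_int t" unfolding r_def using n0 by simp
  have dr: "qz_den r dvd n" using den_dvd[OF n0] nr by simp
  have rmu: "r \<in> mu_S (divisible_primes L)"
    unfolding mu_S_def QZ_def
  proof (intro CollectI conjI ballI)
    show "0 \<le> r" unfolding r_def using t0 by simp
    have "of_int t < (of_nat n :: rat)" using t0 by linarith
    thus "r < 1" unfolding r_def using n0 by simp
    fix q assume "q \<in> divisible_primes L"
    hence "coprime q n" using cop by auto
    thus "coprime q (qz_den r)" using coprime_divisors[OF dvd_refl dr] by blast
  qed
  have "f = dual_map L \<xi> r"
  proof (rule ext)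
    fix x show "f x = dual_map L \<xi> r x"
    proof (cases "x \<in> carrier L")
      case False thus ?thesis using fp unfolding pontryagin_dual_def dual_map_def by auto
    next
      case True
      have "\<exists>k::int. \<exists>y\<in>carrier L. x = g [^] k \<otimes> y [^] (int n)" using gen True by (rule bspec)
      then obtain k :: int where "\<exists>y\<in>carrier L. x = g [^] k \<otimes> y [^] (int n)" ..
      then obtain y where y: "y \<in> carrier L" and xe: "x = g [^] k \<otimes> y [^] (int n)" ..
      have d1: "int n dvd \<xi> x n - k * \<xi> g n"
        using mhom_gen[OF zh_mhom[OF xi n0] g y, of k] unfolding xe[symmetric] .
      have d2: "int n dvd \<phi> x - k * \<phi> g"
        using mhom_gen[OF \<phi>m g y, of k] unfolding xe[symmetric] .
      have d3: "int n dvd t - u * \<phi> g" unfolding t_def by (rule dvd_mod_diff)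
      have E0: "1 - u * \<xi> g n - v * int n = 0" using uv by simp
      have E: "(\<xi> x n - k * \<xi> g n) * t + k * \<xi> g n * (t - u * \<phi> g) + k * \<phi> g * (- (v * int n)) - (\<phi> x - k * \<phi> g)
           = \<xi> x n * t - \<phi> x + k * \<phi> g * (1 - u * \<xi> g n - v * int n)"
        by (simp add: algebra_simps)
      have "int n dvd (\<xi> x n - k * \<xi> g n) * t + k * \<xi> g n * (t - u * \<phi> g) + k * \<phi> g * (- (v * int n)) - (\<phi> x - k * \<phi> g)"
        by (intro dvd_diff dvd_add dvd_mult2 dvd_mult d1 d2 d3) simp
      hence dn: "int n dvd \<xi> x n * t - \<phi> x" unfolding E E0 by simp
      then obtain c where c: "\<xi> x n * t - \<phi> x = int n * c" by (elim dvdE)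
      have fx: "f x = of_int (\<phi> x) / of_nat n" using \<phi>e[OF True] n0 by (simp add: field_simps)
      have "dual_map L \<xi> r x = frac (of_int (\<xi> x n) * r)"
        unfolding dual_map_def using True za_N[OF zh_is[OF xi True] n0 dr] by simp
      also have "\<dots> = frac (f x)"
      proof (rule frac_cong)
        have "of_int (\<xi> x n) * r - f x = of_int (\<xi> x n * t - \<phi> x) / of_nat n"
          unfolding fx r_def using n0 by (simp add: field_simps)
        also have "\<dots> = of_int c" unfolding c using n0 by simp
        finally show "of_int (\<xi> x n) * r - f x \<in> \<int>" by simp
      qed
      also have "frac (f x) = f x" using fp True unfolding pontryagin_dual_def QZ_def by (simp add: frac_eq)
      finally show ?thesis by simp
    qed
  qed
  thus ?thesis using rmu by blast
qed

lemma partD: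
  assumes xi: "zhat_hom L \<xi>" and U: "UU \<xi>"
  shows "bij_betw (dual_map L \<xi>) (mu_S (divisible_primes L)) (tor_dual L)"
  unfolding bij_betw_def
proof
  show "inj_on (dual_map L \<xi>) (mu_S (divisible_primes L))" by (rule partD_inj[OF xi U])
  show "dual_map L \<xi> ` mu_S (divisible_primes L) = tor_dual L"
  proof
    show "dual_map L \<xi> ` mu_S (divisible_primes L) \<subseteq> tor_dual L" using dm_in_tor[OF xi] by auto
    show "tor_dual L \<subseteq> dual_map L \<xi> ` mu_S (divisible_primes L)" using partD_surj[OF xi U] by blast
  qed
qed

end

lemma dvd_eq_range:
  assumes "int n dvd c - c'" "0 \<le> c" "c < int n" "0 \<le> c'" "c' < int n"
  shows "c = c'"
proof -
  have "c mod int n = c' mod int n" using mod_eq_dvd_iff assms(1) by blast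
  moreover have "c mod int n = c" using mod_pos_pos_trivial assms(2,3) by blast
  moreover have "c' mod int n = c'" using mod_pos_pos_trivial assms(4,5) by blast
  ultimately show ?thesis by simp
qed

context rk1 begin

definition Snum :: "nat \<Rightarrow> bool" where
  "Snum d \<longleftrightarrow> (\<forall>q. prime q \<and> q dvd d \<longrightarrow> q \<in> divisible_primes L)"

lemma S_div:
  assumes "d > 0" "Snum d" "x \<in> carrier L"
  shows "pd d x"
  using assms
proof (induction d arbitrary: x rule: less_induct)
  case (less d)
  show ?case
  proof (cases "d = 1")
    case True
    thus ?thesis using pd_self less.prems by simp
  next
    case False
    then obtain q where q: "prime q" "q dvd d" using prime_factor_nat by blast
    then obtain d' where d': "d = q * d'" by auto
    have d'0: "d' > 0" using less.prems(1) d' by (cases d') auto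
    have q2: "q \<ge> 2" using prime_ge_2_nat[OF q(1)] .
    have "d' < d" using d' d'0 q2 by (simp add: less_le_trans[of d' "2 * d'"])
    moreover have "Snum d'" unfolding Snum_def
    proof (intro allI impI)
      fix q' assume "prime q' \<and> q' dvd d'"
      hence "prime q' \<and> q' dvd d" using d' by auto
      thus "q' \<in> divisible_primes L" using less.prems(2) unfolding Snum_def by blast
    qed
    ultimately have "pd d' x" using less.IH d'0 less.prems(3) by blast
    then obtain y where y: "y \<in> carrier L" "x = y [^] (int d')" unfolding pd_def by auto
    have "q \<in> divisible_primes L" using less.prems(2) q unfolding Snum_def by blast
    hence "pd q y" using S_iff y(1) by blast
    then obtain z where z: "z \<in> carrier L" "y = z [^] (int q)" unfolding pd_def by auto
    have "x = z [^] (int q * int d')" using y z by (simp add: int_pow_pow)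
    also have "int q * int d' = int d" using d' by simp
    finally show ?thesis unfolding pd_def using z(1) by blast
  qed
qed

lemma S_zero:
  assumes h: "mhom m h" and m: "m > 0" and dm: "d dvd m" and sd: "Snum d" and x: "x \<in> carrier L"
  shows "int d dvd h x"
proof -
  have d0: "d > 0" using dm m by (cases d) auto
  obtain y where y: "y \<in> carrier L" "x = y [^] (int d)" using S_div[OF d0 sd x] unfolding pd_def by auto
  have 1: "int m dvd h x - int d * h y" using mhom_int[OF h y(1)] y(2) by simp
  have 2: "int d dvd h x - int d * h y" using dvd_trans[OF _ 1] dm by simp
  have "int d dvd (h x - int d * h y) + int d * h y" by (rule dvd_add[OF 2]) simp
  thus ?thesis by simp
qed

lemma decomp:
  assumes n: "n > 0"
  shows "\<exists>s t. s * t = n \<and> Snum s \<and> (\<forall>q\<in>divisible_primes L. coprime q t)"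
proof -
  define D where "D = {d. d dvd n \<and> (\<forall>q\<in>divisible_primes L. coprime q d)}"
  have finD: "finite D" unfolding D_def
    by (rule finite_subset[of _ "{..n}"]) (use n in \<open>auto dest: dvd_imp_le\<close>)
  have "1 \<in> D" unfolding D_def by simp
  define t where "t = Max D"
  have tD: "t \<in> D" unfolding t_def using finD \<open>1 \<in> D\<close> by (intro Max_in) auto
  hence tn: "t dvd n" and tc: "\<forall>q\<in>divisible_primes L. coprime q t" unfolding D_def by auto
  have t0: "t > 0" using tn n by (cases t) auto
  define s where "s = n div t"
  have st: "s * t = n" unfolding s_def using tn by simp
  have "Snum s" unfolding Snum_def
  proof (intro allI impI)
    fix q assume q: "prime q \<and> q dvd s"
    show "q \<in> divisible_primes L"
    proof (rule ccontr)
      assume qS: "q \<notin> divisible_primes L"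
      have "q * t dvd s * t" using q by (simp add: mult_dvd_mono)
      hence "q * t dvd n" using st by simp
      moreover have "\<forall>q'\<in>divisible_primes L. coprime q' (q * t)"
      proof
        fix q' assume q': "q' \<in> divisible_primes L"
        have pq': "prime q'" using q' unfolding divisible_primes_def by auto
        have "q' \<noteq> q" using q' qS by auto
        hence "coprime q' q" using primes_coprime[OF pq'] q by blast
        thus "coprime q' (q * t)" using tc q' by simp
      qed
      ultimately have "q * t \<in> D" unfolding D_def by simp
      hence "q * t \<le> t" unfolding t_def using finD by (simp add: Max_ge)
      moreover have "q \<ge> 2" using q prime_ge_2_nat by auto
      hence "2 * t \<le> q * t" by simp
      ultimately show False using t0 by linarith
    qed
  qed
  thus ?thesis using st tc by blast
qed

lemma Snum_coprime:
  assumes "Snum d" "\<forall>q\<in>divisible_primes L. coprime q t" "t > 0"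
  shows "coprime (int d) (int t)"
proof (rule no_common_prime_coprime[OF assms(3)])
  fix p assume p: "prime p" "p dvd t"
  show "\<not> int p dvd int d"
  proof
    assume "int p dvd int d"
    hence "p dvd d" by simp
    hence "p \<in> divisible_primes L" using assms(1) p(1) unfolding Snum_def by blast
    hence "coprime p t" using assms(2) by blast
    hence "is_unit p" using p(2) coprime_common_divisor[of p t p] by auto
    thus False using p(1) by simp
  qed
qed

definition PP :: "('a \<Rightarrow> nat \<Rightarrow> int) \<Rightarrow> ('a \<Rightarrow> nat \<Rightarrow> int) \<Rightarrow> nat \<Rightarrow> int \<Rightarrow> bool" where
  "PP \<xi> \<psi> n c \<longleftrightarrow> 0 \<le> c \<and> c < int n \<and> (\<forall>x\<in>carrier L. int n dvd \<psi> x n - c * \<xi> x n)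
     \<and> (\<forall>d. d dvd n \<and> Snum d \<longrightarrow> int d dvd c)"

lemma PP_ex1:
  assumes xi: "zhat_hom L \<xi>" and U: "UU \<xi>" and ps: "zhat_hom L \<psi>" and n: "n > 0"
  shows "\<exists>!c. PP \<xi> \<psi> n c"
proof -
  obtain s t where st: "s * t = n" and sS: "Snum s" and tc: "\<forall>q\<in>divisible_primes L. coprime q t"
    using decomp[OF n] by blast
  have t0: "t > 0" using st n by (cases t) auto
  have s0: "s > 0" using st n by (cases s) auto
  have tn: "t dvd n" and sn: "s dvd n" using st by auto
  have stn: "int n = int s * int t" unfolding st[symmetric] by simp
  have cst: "coprime (int s) (int t)" using Snum_coprime[OF sS tc t0] .
  obtain g where g: "g \<in> carrier L"
    and gen: "\<forall>x\<in>carrier L. \<exists>k::int. \<exists>y\<in>carrier L. x = g [^] k \<otimes> y [^] (int t)"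
    using gen_for[OF t0 tc] by blast
  have gu: "coprime (\<xi> g t) (int t)" using unit_gen[OF xi U t0 tc g gen] .
  obtain u v where uv: "u * \<xi> g t + v * int t = 1"
    using bezout_int[of "\<xi> g t" "int t"] gu by (metis coprime_iff_gcd_eq_1)
  define b where "b = u * \<psi> g t"
  have Bt: "int t dvd \<psi> x t - b * \<xi> x t" if x: "x \<in> carrier L" for x
  proof -
    have "\<exists>k::int. \<exists>y\<in>carrier L. x = g [^] k \<otimes> y [^] (int t)" using gen x by (rule bspec)
    then obtain k :: int where "\<exists>y\<in>carrier L. x = g [^] k \<otimes> y [^] (int t)" ..
    then obtain y where y: "y \<in> carrier L" and xe: "x = g [^] k \<otimes> y [^] (int t)" ..
    have d1: "int t dvd \<xi> x t - k * \<xi> g t"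
      using mhom_gen[OF zh_mhom[OF xi t0] g y, of k] unfolding xe[symmetric] .
    have d2: "int t dvd \<psi> x t - k * \<psi> g t"
      using mhom_gen[OF zh_mhom[OF ps t0] g y, of k] unfolding xe[symmetric] .
    have E0: "u * \<xi> g t + v * int t - 1 = 0" using uv by simp
    have E1: "(\<psi> x t - k * \<psi> g t) - b * (\<xi> x t - k * \<xi> g t) + k * \<psi> g t * (v * int t)
        = \<psi> x t - b * \<xi> x t + k * \<psi> g t * (u * \<xi> g t + v * int t - 1)"
      unfolding b_def by (simp add: algebra_simps)
    have E: "\<psi> x t - b * \<xi> x t = (\<psi> x t - k * \<psi> g t) - b * (\<xi> x t - k * \<xi> g t) + k * \<psi> g t * (v * int t)"
      unfolding E1 E0 by simp
    have "int t dvd (\<psi> x t - k * \<psi> g t) - b * (\<xi> x t - k * \<xi> g t) + k * \<psi> g t * (v * int t)"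
      by (intro dvd_add dvd_diff dvd_mult d1 d2) simp
    thus ?thesis unfolding E .
  qed
  obtain w w' where ww: "w * int s + w' * int t = 1"
    using bezout_int[of "int s" "int t"] cst by (metis coprime_iff_gcd_eq_1)
  define c where "c = (int s * w * b) mod int n"
  have ex: "PP \<xi> \<psi> n c"
    unfolding PP_def
  proof (intro conjI ballI allI impI)
    show "0 \<le> c" "c < int n" unfolding c_def using n by auto
    fix x assume x: "x \<in> carrier L"
    have a1: "int t dvd \<psi> x n - \<psi> x t" using zh_red[OF ps x t0 n tn] .
    have a2: "int t dvd \<xi> x n - \<xi> x t" using zh_red[OF xi x t0 n tn] .
    have tn': "int t dvd int n" using tn by simp
    have a3: "int t dvd c - int s * w * b"
      unfolding c_def by (rule dvd_trans[OF tn' dvd_mod_diff])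
    have "int s * w * b - b = (w * int s - 1) * b" by (simp add: algebra_simps)
    also have "w * int s - 1 = - (w' * int t)" using ww by simp
    finally have a4: "int s * w * b - b = - (w' * b) * int t" by (simp add: algebra_simps)
    have a5: "int t dvd c - b"
    proof -
      have "int t dvd (c - int s * w * b) + (int s * w * b - b)" unfolding a4 by (rule dvd_add[OF a3]) simp
      thus ?thesis by simp
    qed
    have E: "\<psi> x n - c * \<xi> x n = (\<psi> x n - \<psi> x t) + (\<psi> x t - b * \<xi> x t) - (c - b) * \<xi> x n - b * (\<xi> x n - \<xi> x t)"
      by (simp add: algebra_simps)
    have dt: "int t dvd \<psi> x n - c * \<xi> x n"
      unfolding E by (intro dvd_add dvd_diff dvd_mult dvd_mult2 a1 a2 a5 Bt[OF x])
    have ds1: "int s dvd \<psi> x n" using S_zero[OF zh_mhom[OF ps n] n sn sS x] .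
    have ds2: "int s dvd c" unfolding c_def by (rule dvd_mod) (use sn in auto)
    have ds: "int s dvd \<psi> x n - c * \<xi> x n" by (intro dvd_diff dvd_mult2 ds1 ds2)
    have "int s * int t dvd \<psi> x n - c * \<xi> x n" by (rule divides_mult[OF ds dt cst])
    thus "int n dvd \<psi> x n - c * \<xi> x n" using stn by simp
  next
    fix d assume d: "d dvd n \<and> Snum d"
    have "coprime (int d) (int t)" using Snum_coprime[OF _ tc t0] d by blast
    moreover have "int d dvd int n" using d by simp
    hence "int d dvd int s * int t" using stn by simp
    ultimately have "int d dvd int s" by (simp add: coprime_dvd_mult_left_iff)
    moreover have "int s dvd c" unfolding c_def by (rule dvd_mod) (use sn in auto)
    ultimately show "int d dvd c" by (rule dvd_trans)
  qed
  have un: "c1 = c2" if c1: "PP \<xi> \<psi> n c1" and c2: "PP \<xi> \<psi> n c2" for c1 c2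
  proof -
    have e1: "int n dvd \<psi> g n - c1 * \<xi> g n" using c1 g unfolding PP_def by blast
    have e2: "int n dvd \<psi> g n - c2 * \<xi> g n" using c2 g unfolding PP_def by blast
    have "int n dvd (\<psi> g n - c2 * \<xi> g n) - (\<psi> g n - c1 * \<xi> g n)" by (rule dvd_diff[OF e2 e1])
    hence "int n dvd (c1 - c2) * \<xi> g n" by (simp add: algebra_simps)
    moreover have "int t dvd int n" using tn by simp
    ultimately have "int t dvd (c1 - c2) * \<xi> g n" by (metis dvd_trans)
    moreover have "int t dvd (c1 - c2) * (\<xi> g n - \<xi> g t)" by (rule dvd_mult[OF zh_red[OF xi g t0 n tn]])
    ultimately have "int t dvd (c1 - c2) * \<xi> g n - (c1 - c2) * (\<xi> g n - \<xi> g t)" by (rule dvd_diff)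
    hence "int t dvd (c1 - c2) * \<xi> g t" by (simp add: algebra_simps)
    moreover have "coprime (int t) (\<xi> g t)" using gu by (simp add: coprime_commute)
    ultimately have dt: "int t dvd c1 - c2" by (simp add: coprime_dvd_mult_left_iff)
    have "int s dvd c1" "int s dvd c2" using c1 c2 sn sS unfolding PP_def by blast+
    hence ds: "int s dvd c1 - c2" by (rule dvd_diff)
    have "int s * int t dvd c1 - c2" by (rule divides_mult[OF ds dt cst])
    hence "int n dvd c1 - c2" using stn by simp
    thus ?thesis using c1 c2 unfolding PP_def by (intro dvd_eq_range) auto
  qed
  show ?thesis using ex un by blast
qed

lemma partB:
  assumes xi: "zhat_hom L \<xi>" and U: "UU \<xi>"
  shows "zhat_generates L \<xi>"
  unfolding zhat_generates_def
proof (intro allI impI)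
  fix \<psi> assume ps: "zhat_hom L \<psi>"
  define a where "a n = (if n = 0 then 0 else (THE c. PP \<xi> \<psi> n c))" for n
  have Pa: "PP \<xi> \<psi> n (a n)" if n: "n > 0" for n
    using theI'[OF PP_ex1[OF xi U ps n]] n unfolding a_def by simp
  have comp: "a m = a n mod int m" if m: "m > 0" and n: "n > 0" and mn: "m dvd n" for m n
  proof -
    have "PP \<xi> \<psi> m (a n mod int m)"
      unfolding PP_def
    proof (intro conjI ballI allI impI)
      show "0 \<le> a n mod int m" "a n mod int m < int m" using m by auto
      fix x assume x: "x \<in> carrier L"
      have b1: "int m dvd \<psi> x n - \<psi> x m" using zh_red[OF ps x m n mn] .
      have b2: "int m dvd \<xi> x n - \<xi> x m" using zh_red[OF xi x m n mn] .
      have b3: "int m dvd a n - a n mod int m" by (rule dvd_minus_mod)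
      have "int n dvd \<psi> x n - a n * \<xi> x n" using Pa[OF n] x unfolding PP_def by blast
      moreover have "int m dvd int n" using mn by simp
      ultimately have b4: "int m dvd \<psi> x n - a n * \<xi> x n" by (metis dvd_trans)
      have E: "\<psi> x m - a n mod int m * \<xi> x m = - (\<psi> x n - \<psi> x m) + (\<psi> x n - a n * \<xi> x n)
          + (a n - a n mod int m) * \<xi> x n + a n mod int m * (\<xi> x n - \<xi> x m)"
        by (simp add: algebra_simps)
      show "int m dvd \<psi> x m - a n mod int m * \<xi> x m"
        unfolding E by (intro dvd_add dvd_mult dvd_mult2 b1 b2 b3 b4 dvd_minus_iff[THEN iffD2])
    next
      fix d assume d: "d dvd m \<and> Snum d"
      have "int d dvd a n" using Pa[OF n] d mn unfolding PP_def by (meson dvd_trans)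
      moreover have "int d dvd int m" using d by simp
      ultimately show "int d dvd a n mod int m" by (rule dvd_mod)
    qed
    moreover have "PP \<xi> \<psi> m (a m)" using Pa[OF m] .
    ultimately show ?thesis using PP_ex1[OF xi U ps m] by blast
  qed
  have za: "is_zhat a"
    unfolding is_zhat_def
  proof (intro conjI allI impI)
    show "a 0 = 0" unfolding a_def by simp
    fix n :: nat assume n: "n > 0"
    show "0 \<le> a n" "a n < int n" using Pa[OF n] unfolding PP_def by auto
  next
    fix m n :: nat assume "0 < m" "0 < n" "m dvd n"
    thus "a m = a n mod int m" using comp by blast
  qed
  have "\<forall>x\<in>carrier L. \<psi> x = zhat_mul a (\<xi> x)"
  proof
    fix x assume x: "x \<in> carrier L"
    show "\<psi> x = zhat_mul a (\<xi> x)"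
    proof (rule ext)
      fix n
      show "\<psi> x n = zhat_mul a (\<xi> x) n"
      proof (cases "n = 0")
        case True
        have "\<psi> x 0 = 0" using zh_is[OF ps x] unfolding is_zhat_def by blast
        thus ?thesis using True unfolding zhat_mul_def by simp
      next
        case False
        hence n: "n > 0" by simp
        have r: "0 \<le> \<psi> x n" "\<psi> x n < int n" using zh_range[OF ps x n] by auto
        have "int n dvd \<psi> x n - a n * \<xi> x n" using Pa[OF n] x unfolding PP_def by blast
        hence "\<psi> x n mod int n = (a n * \<xi> x n) mod int n" by (simp add: mod_eq_dvd_iff)
        thus ?thesis using r False unfolding zhat_mul_def by simp
      qed
    qed
  qed
  thus "\<exists>a. is_zhat a \<and> (\<forall>x\<in>carrier L. \<psi> x = zhat_mul a (\<xi> x))" using za by blast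
qed

end

context rk1 begin

lemma swap_eq:
  assumes a: "a \<in> carrier L" and b: "b \<in> carrier L" and c: "c \<in> carrier L" and d: "d \<in> carrier L"
    and e: "a \<otimes> b = c \<otimes> d"
  shows "a \<otimes> inv c = d \<otimes> inv b"
proof -
  have "(a \<otimes> inv c) \<otimes> b = (a \<otimes> b) \<otimes> inv c" using a b c by (simp add: m_ac)
  also have "\<dots> = (c \<otimes> d) \<otimes> inv c" using e by simp
  also have "\<dots> = (d \<otimes> c) \<otimes> inv c" by (subst m_comm[OF c d]) (rule refl)
  also have "\<dots> = d \<otimes> (c \<otimes> inv c)" by (rule m_assoc) (use c d in auto)
  also have "\<dots> = d" using c d by simp
  finally have "(a \<otimes> inv c) \<otimes> b = d" .
  thus ?thesis using a b c d by (simp add: inv_solve_right)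
qed

lemma partA:
  assumes xi: "zhat_hom L \<xi>" and G: "zhat_generates L \<xi>"
  shows "UU \<xi>"
  unfolding UU_def
proof (intro allI impI)
  fix p assume p: "prime p" and pS: "p \<notin> divisible_primes L"
  show "\<exists>x\<in>carrier L. \<not> int p dvd \<xi> x p"
  proof (rule ccontr)
    assume "\<not> ?thesis"
    hence allp: "\<forall>x\<in>carrier L. int p dvd \<xi> x p" by auto
    obtain g where g: "g \<in> carrier L" "\<not> pd p g" using pS p S_iff by blast
    have p0: "p > 0" using prime_gt_0_nat[OF p] .
    define vv where "vv n = multiplicity p n" for n
    define qq where "qq n = n div p ^ vv n" for n
    have pq: "p ^ vv n * qq n = n" for n
      unfolding qq_def vv_def using multiplicity_dvd[of p n] by simp
    have nq: "\<not> p dvd qq n" if "n > 0" for n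
      unfolding qq_def vv_def by (rule multiplicity_decompose) (use that prime_gt_1_nat[OF p] in auto)
    have cpq: "coprime (p ^ vv n) (qq n)" if "n > 0" for n
      using prime_imp_power_coprime[OF p nq[OF that]] by (simp add: coprime_commute)
    have ngP: "\<not> pd p' g" if "prime p'" "p' dvd p ^ v" for p' v
    proof -
      have "p' dvd p" using prime_dvd_power[OF that] .
      hence "p' = p" using primes_dvd_imp_eq[OF that(1) p] by simp
      thus ?thesis using g(2) by simp
    qed
    have genP: "\<exists>k::int. \<exists>y\<in>carrier L. x = g [^] k \<otimes> y [^] (int (p ^ v))" if "x \<in> carrier L" for x v
      by (rule cyc_a[OF g(1) _ ngP that]) (use p0 in simp)
    have uniqP: "int (p ^ v) dvd k" if "y \<in> carrier L" "g [^] k = y [^] (int (p ^ v))" for k y v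
      by (rule cyc_b[OF g(1) _ ngP that]) (use p0 in simp)
    have eex: "\<exists>e::int. int (p ^ vv n) dvd e - 1 \<and> int (qq n) dvd e" if "n > 0" for n
    proof -
      have "coprime (int (p ^ vv n)) (int (qq n))" using cpq[OF that] by simp
      then obtain u w where uw: "u * int (p ^ vv n) + w * int (qq n) = 1"
        using bezout_int[of "int (p ^ vv n)" "int (qq n)"] by (metis coprime_iff_gcd_eq_1)
      have "w * int (qq n) - 1 = int (p ^ vv n) * (- u)" using uw by (simp add: algebra_simps)
      hence "int (p ^ vv n) dvd w * int (qq n) - 1" by (metis dvd_triv_left)
      thus ?thesis by (intro exI[of _ "w * int (qq n)"]) simp
    qed
    define e where "e n = (SOME e::int. int (p ^ vv n) dvd e - 1 \<and> int (qq n) dvd e)" for n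
    have eP: "int (p ^ vv n) dvd e n - 1 \<and> int (qq n) dvd e n" if "n > 0" for n
      unfolding e_def by (rule someI_ex[OF eex[OF that]])
    define kk where "kk n x = (SOME k::int. \<exists>y\<in>carrier L. x = g [^] k \<otimes> y [^] (int (p ^ vv n)))" for n x
    have kkP: "\<exists>y\<in>carrier L. x = g [^] (kk n x) \<otimes> y [^] (int (p ^ vv n))" if "x \<in> carrier L" for n x
      unfolding kk_def by (rule someI_ex[OF genP[OF that]])
    define \<psi> where "\<psi> x n = (if n = 0 then 0 else (kk n x * e n) mod int n)" for x n
    have W: "\<psi> x n = (k * e n) mod int n"
      if n: "n > 0" and x: "x \<in> carrier L" and y: "y \<in> carrier L"
        and xe: "x = g [^] k \<otimes> y [^] (int (p ^ vv n))" for n x y k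
    proof -
      obtain y0 where y0: "y0 \<in> carrier L" and xe0: "x = g [^] (kk n x) \<otimes> y0 [^] (int (p ^ vv n))"
        using kkP[OF x] by blast
      let ?P = "int (p ^ vv n)"
      have eq1: "g [^] k \<otimes> y [^] ?P = g [^] (kk n x) \<otimes> y0 [^] ?P" using xe xe0 by simp
      have "g [^] k \<otimes> inv (g [^] (kk n x)) = y0 [^] ?P \<otimes> inv (y [^] ?P)"
        by (rule swap_eq[OF _ _ _ _ eq1]) (use g y y0 in auto)
      moreover have "g [^] k \<otimes> inv (g [^] (kk n x)) = g [^] (k - kk n x)"
        using g(1) by (simp add: int_pow_diff)
      moreover have "y0 [^] ?P \<otimes> inv (y [^] ?P) = (y0 \<otimes> inv y) [^] ?P"
        using y y0 by (simp add: int_pow_distrib int_pow_inv)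
      ultimately have "g [^] (k - kk n x) = (y0 \<otimes> inv y) [^] ?P" by simp
      hence d1: "?P dvd k - kk n x" by (rule uniqP[rotated]) (use y y0 in simp)
      have d2: "int (qq n) dvd e n" using eP[OF n] by blast
      have "?P * int (qq n) dvd (k - kk n x) * e n" using d1 d2 by (rule mult_dvd_mono)
      moreover have "?P * int (qq n) = int n" using pq[of n] by (metis of_nat_mult)
      ultimately have "int n dvd k * e n - kk n x * e n" by (simp add: algebra_simps)
      hence "(k * e n) mod int n = (kk n x * e n) mod int n" by (simp add: mod_eq_dvd_iff)
      thus ?thesis unfolding \<psi>_def using n by simp
    qed
    have ecomp: "int m dvd e n - e m" if m: "m > 0" and n: "n > 0" and mn: "m dvd n" for m n
    proof -
      have vle: "vv m \<le> vv n" unfolding vv_def by (rule dvd_imp_multiplicity_le) (use mn n in auto)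
      have pp: "int (p ^ vv m) dvd int (p ^ vv n)" using vle by (simp add: le_imp_power_dvd)
      have 1: "int (p ^ vv m) dvd e n - 1" using dvd_trans[OF pp] eP[OF n] by blast
      have 2: "int (p ^ vv m) dvd e m - 1" using eP[OF m] by blast
      have 3: "int (p ^ vv m) dvd e n - e m" using dvd_diff[OF 1 2] by simp
      have "qq m dvd m" using pq[of m] by (metis dvd_triv_right)
      hence "qq m dvd p ^ vv n * qq n" using mn pq[of n] by (metis dvd_trans)
      moreover have "coprime (qq m) (p ^ vv n)" using prime_imp_power_coprime[OF p nq[OF m]] .
      ultimately have "qq m dvd qq n" by (simp add: coprime_dvd_mult_right_iff)
      hence "int (qq m) dvd e n" using eP[OF n] by (metis dvd_trans int_dvd_int_iff)
      moreover have "int (qq m) dvd e m" using eP[OF m] by blast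
      ultimately have 4: "int (qq m) dvd e n - e m" by (rule dvd_diff)
      have "int (p ^ vv m) * int (qq m) dvd e n - e m"
        by (rule divides_mult[OF 3 4]) (use cpq[OF m] in simp)
      moreover have "int (p ^ vv m) * int (qq m) = int m" using pq[of m] by (metis of_nat_mult)
      ultimately show ?thesis by simp
    qed
    have zh: "zhat_hom L \<psi>"
      unfolding zhat_hom_def
    proof (intro conjI ballI)
      fix x assume x: "x \<in> carrier L"
      show "is_zhat (\<psi> x)"
        unfolding is_zhat_def
      proof (intro conjI allI impI)
        show "\<psi> x 0 = 0" unfolding \<psi>_def by simp
        fix n :: nat assume n: "n > 0"
        show "0 \<le> \<psi> x n" "\<psi> x n < int n" unfolding \<psi>_def using n by auto
      next
        fix m n :: nat assume m: "0 < m" and n: "0 < n" and mn: "m dvd n"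
        obtain y where y: "y \<in> carrier L" and xe: "x = g [^] (kk n x) \<otimes> y [^] (int (p ^ vv n))"
          using kkP[OF x] by blast
        have vle: "vv m \<le> vv n" unfolding vv_def by (rule dvd_imp_multiplicity_le) (use mn n in auto)
        define y' where "y' = y [^] (int (p ^ (vv n - vv m)))"
        have y'c: "y' \<in> carrier L" unfolding y'_def using y by simp
        have "y' [^] (int (p ^ vv m)) = y [^] (int (p ^ (vv n - vv m)) * int (p ^ vv m))"
          unfolding y'_def using y by (simp add: int_pow_pow)
        also have "int (p ^ (vv n - vv m)) * int (p ^ vv m) = int (p ^ vv n)"
          using vle by (simp flip: of_nat_mult power_add)
        finally have "x = g [^] (kk n x) \<otimes> y' [^] (int (p ^ vv m))" using xe by simp
        hence 1: "\<psi> x m = (kk n x * e m) mod int m" using W[OF m x y'c] by blast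
        have 2: "\<psi> x n = (kk n x * e n) mod int n" unfolding \<psi>_def using n by simp
        have "int m dvd - (e n - e m)" using ecomp[OF m n mn] by (simp only: dvd_minus_iff)
        hence "int m dvd kk n x * (e m - e n)" by simp
        hence "(kk n x * e m) mod int m = (kk n x * e n) mod int m"
          by (simp add: mod_eq_dvd_iff algebra_simps)
        also have "\<dots> = ((kk n x * e n) mod int n) mod int m"
          using mn by (simp add: mod_mod_cancel)
        finally show "\<psi> x m = \<psi> x n mod int m" using 1 2 by simp
      qed
    next
      fix x y assume x: "x \<in> carrier L" and y: "y \<in> carrier L"
      show "\<psi> (x \<otimes> y) = zhat_add (\<psi> x) (\<psi> y)"
      proof (rule ext)
        fix n show "\<psi> (x \<otimes> y) n = zhat_add (\<psi> x) (\<psi> y) n"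
        proof (cases "n = 0")
          case True thus ?thesis unfolding \<psi>_def zhat_add_def by simp
        next
          case False
          hence n: "n > 0" by simp
          let ?P = "int (p ^ vv n)"
          define k1 where "k1 = kk n x"
          define k2 where "k2 = kk n y"
          obtain y1 where y1: "y1 \<in> carrier L" and xe: "x = g [^] k1 \<otimes> y1 [^] ?P"
            using kkP[OF x] unfolding k1_def by blast
          obtain y2 where y2: "y2 \<in> carrier L" and ye: "y = g [^] k2 \<otimes> y2 [^] ?P"
            using kkP[OF y] unfolding k2_def by blast
          have "x \<otimes> y = (g [^] k1 \<otimes> y1 [^] ?P) \<otimes> (g [^] k2 \<otimes> y2 [^] ?P)"
            using xe ye by simp
          also have "\<dots> = (g [^] k1 \<otimes> g [^] k2) \<otimes> (y1 [^] ?P \<otimes> y2 [^] ?P)"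
            using g(1) y1 y2 by (simp add: m_ac)
          also have "\<dots> = g [^] (k1 + k2) \<otimes> (y1 \<otimes> y2) [^] ?P"
            using g(1) y1 y2 by (simp add: int_pow_mult int_pow_distrib)
          finally have xy: "x \<otimes> y = g [^] (k1 + k2) \<otimes> (y1 \<otimes> y2) [^] ?P" .
          have "\<psi> (x \<otimes> y) n = ((kk n x + kk n y) * e n) mod int n"
            using W[OF n m_closed[OF x y] m_closed[OF y1 y2] xy] unfolding k1_def k2_def .
          moreover have "zhat_add (\<psi> x) (\<psi> y) n = ((kk n x * e n) mod int n + (kk n y * e n) mod int n) mod int n"
            unfolding zhat_add_def \<psi>_def using n by simp
          ultimately show ?thesis by (simp add: mod_add_eq distrib_right)
        qed
      qed
    qed
    obtain a where a: "is_zhat a" "\<forall>x\<in>carrier L. \<psi> x = zhat_mul a (\<xi> x)"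
      using G zh unfolding zhat_generates_def by blast
    have "\<psi> g p = zhat_mul a (\<xi> g) p" using a(2) g(1) by simp
    also have "\<dots> = (a p * \<xi> g p) mod int p" unfolding zhat_mul_def using p0 by simp
    also have "\<dots> = 0" using allp g(1) by simp
    finally have z: "\<psi> g p = 0" .
    have vp: "vv p = 1" unfolding vv_def using p by simp
    have "g = g [^] (1::int) \<otimes> \<one> [^] (int (p ^ vv p))" using g(1) by simp
    hence "\<psi> g p = (1 * e p) mod int p" using W[OF p0 g(1) one_closed] by blast
    moreover have "int p dvd e p - 1" using eP[OF p0] vp by simp
    hence "e p mod int p = 1 mod int p" by (simp add: mod_eq_dvd_iff)
    moreover have "1 mod int p = 1" using prime_ge_2_nat[OF p] by simp
    ultimately show False using z by simp
  qed
qed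

end

theorem proposition8p9:
  fixes L :: "('a, 'b) monoid_scheme" and \<xi> :: "'a \<Rightarrow> nat \<Rightarrow> int"
  assumes "torsion_free_rank1 L"
    and "zhat_hom L \<xi>"
  shows "zhat_generates L \<xi> \<longleftrightarrow>
    (bij_betw (dual_map L \<xi>) (mu_S (divisible_primes L)) (tor_dual L)
     \<and> (\<forall>r\<in>mu_S (divisible_primes L). \<forall>s\<in>mu_S (divisible_primes L).
          dual_map L \<xi> (qz_add r s) = dual_add L (dual_map L \<xi> r) (dual_map L \<xi> s)))"
proof -
  have "rk1 L" unfolding rk1_def rk1_axioms_def
    using assms(1) unfolding torsion_free_rank1_def by blast
  then interpret rk1 L .
  show ?thesis
  proof
    assume G: "zhat_generates L \<xi>"
    have U: "UU \<xi>" by (rule partA[OF assms(2) G])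
    show "bij_betw (dual_map L \<xi>) (mu_S (divisible_primes L)) (tor_dual L)
     \<and> (\<forall>r\<in>mu_S (divisible_primes L). \<forall>s\<in>mu_S (divisible_primes L).
          dual_map L \<xi> (qz_add r s) = dual_add L (dual_map L \<xi> r) (dual_map L \<xi> s))"
      using partD[OF assms(2) U] dm_add[OF assms(2)] by blast
  next
    assume R: "bij_betw (dual_map L \<xi>) (mu_S (divisible_primes L)) (tor_dual L)
     \<and> (\<forall>r\<in>mu_S (divisible_primes L). \<forall>s\<in>mu_S (divisible_primes L).
          dual_map L \<xi> (qz_add r s) = dual_add L (dual_map L \<xi> r) (dual_map L \<xi> s))"
    hence "inj_on (dual_map L \<xi>) (mu_S (divisible_primes L))" by (simp add: bij_betw_def)
    hence U: "UU \<xi>" by (rule partC[OF assms(2)])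
    show "zhat_generates L \<xi>" by (rule partB[OF assms(2) U])
  qed
qed

end
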